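(* Let $G:=|\cdot|$ on $\mathbb{R}$ and $(x^*,q^* )\in\operatorname{graph}\partial G$. Then for every $\gamma>0$, for all $x\in\big[(-1-q^* )/\gamma,\,(1-q^* )/\gamma\big]$ and all $q\in\partial G(x)$, \[ \inf_{\bar x\in(\partial G)^{-1}(q^* )}(q-q^* )(x-\bar x)\ge\gamma\operatorname{dist}^2(x,(\partial G)^{-1}(q^* )), \] i.e. $\partial G$ is $(I,\gamma I)$-strongly submonotone with the set $\mathcal{U}=[(-1-q^* )/\gamma,(1-q^* )/\gamma]$.
   Context: $\partial G$ is the convex subdifferential of the absolute value ($\partial G(x)=\{\operatorname{sign}x\}$ for $x\ne0$, $\partial G(0)=[-1,1]$); $(\partial G)^{-1}(q^* )=\{x:q^*\in\partial G(x)\}$; $\operatorname{dist}(x,A)=\inf_{a\in A}|x-a|$. *)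

theory Defs
  imports "HOL-Analysis.Analysis"
begin

definition subdiff_abs :: "real \<Rightarrow> real set" where
  "subdiff_abs x = (if x = 0 then {-1..1} else {sgn x})"

definition subdiff_abs_inv :: "real \<Rightarrow> real set" where
  "subdiff_abs_inv q = {x. q \<in> subdiff_abs x}"

end

theory Submission
  imports Defs
begin

lemma sub_mul: "q \<in> subdiff_abs x \<Longrightarrow> q * x = \<bar>x\<bar> \<and> \<bar>q\<bar> \<le> 1"
  by (auto simp: subdiff_abs_def sgn_if split: if_splits)

theorem lemma5p11:
  fixes xs qs \<gamma> x q :: real
  assumes "qs \<in> subdiff_abs xs"
    and "\<gamma> > 0"
    and "x \<in> {(-1 - qs) / \<gamma> .. (1 - qs) / \<gamma>}"
    and "q \<in> subdiff_abs x"
  shows "(INF xb\<in>subdiff_abs_inv qs. (q - qs) * (x - xb)) \<ge> \<gamma> * (infdist x (subdiff_abs_inv qs))\<^sup>2"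
proof -
  have qs1: "\<bar>qs\<bar> \<le> 1" using sub_mul[OF assms(1)] by simp
  have q: "q * x = \<bar>x\<bar>" using sub_mul[OF assms(4)] by simp
  have lo: "-1 - qs \<le> \<gamma> * x" and hi: "\<gamma> * x \<le> 1 - qs"
    using assms(2,3) by (auto simp: field_simps)
  have main: "(q - qs) * x \<ge> \<gamma> * x\<^sup>2"
  proof (cases "x \<ge> 0")
    case True
    then have "x * (\<gamma> * x) \<le> x * (1 - qs)" using hi mult_left_mono by blast
    moreover have qx: "q * x = x" using q True by simp
    ultimately show ?thesis unfolding left_diff_distrib qx power2_eq_square by (simp add: algebra_simps)
  next
    case False
    then have "x * (-1 - qs) \<ge> x * (\<gamma> * x)" using lo mult_left_mono_neg[of "-1-qs" "\<gamma>*x" x] by simp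
    moreover have qx: "q * x = - x" using q False by simp
    ultimately show ?thesis unfolding left_diff_distrib qx power2_eq_square by (simp add: algebra_simps)
  qed
  have zin: "0 \<in> subdiff_abs_inv qs" using qs1 by (auto simp: subdiff_abs_inv_def subdiff_abs_def)
  have each: "\<gamma> * x\<^sup>2 \<le> (q - qs) * (x - xb)" if "xb \<in> subdiff_abs_inv qs" for xb
  proof -
    have h: "qs \<in> subdiff_abs xb" using that by (simp add: subdiff_abs_inv_def)
    have "qs * xb = \<bar>xb\<bar>" using sub_mul[OF h] by simp
    moreover have "\<bar>q\<bar> \<le> 1" using sub_mul[OF assms(4)] by simp
    moreover have "q * xb \<le> \<bar>xb\<bar>"
    proof -
      have "q * xb \<le> \<bar>q * xb\<bar>" by simp
      also have "\<dots> = \<bar>q\<bar> * \<bar>xb\<bar>" by (simp add: abs_mult)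
      also have "\<dots> \<le> \<bar>xb\<bar>" using \<open>\<bar>q\<bar> \<le> 1\<close> mult_right_mono[of "\<bar>q\<bar>" 1 "\<bar>xb\<bar>"] by simp
      finally show ?thesis .
    qed
    ultimately show ?thesis using main by (simp add: algebra_simps)
  qed
  have d: "infdist x (subdiff_abs_inv qs) \<le> \<bar>x\<bar>"
    using infdist_le[OF zin, of x] by (simp add: dist_real_def)
  have "(infdist x (subdiff_abs_inv qs))\<^sup>2 \<le> \<bar>x\<bar>\<^sup>2"
    using power_mono[OF d infdist_nonneg, of 2] by simp
  then have "\<gamma> * (infdist x (subdiff_abs_inv qs))\<^sup>2 \<le> \<gamma> * x\<^sup>2"
    using assms(2) by simp
  also have "\<dots> \<le> (INF xb\<in>subdiff_abs_inv qs. (q - qs) * (x - xb))"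
    using zin each by (intro cINF_greatest) auto
  finally show ?thesis .
qed

end
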